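(* Let $\alpha\ge4$ and let $N'$, $M_l$, $C_j$ be as produced by the clustering procedure. Let $l\in N'$ and $j\in N$. (1) For every $j_b\in M_l$, $c_{lj}\le 2c_{j_bj}+2\alpha C_j$. (2) For all $j_a,j_b\in M_l$ with $c_{lj_a}\le c_{lj_b}$, $c_{j_aj}\le 3c_{j_bj}+4\alpha C_j$.
   Context: Setting: finite set $N$ of locations, capacity $M>0$, demands $d_j\ge0$, integer $k\ge1$, metric costs $c_{ij}$ on $N$ (nonnegative, $c_{ii}=0$, symmetric, triangle inequality). $(x,y)$ is an optimal solution of the LP-relaxation: minimize $\sum_{i,j}d_jc_{ij}x_{ij}$ s.t. $\sum_{i}x_{ij}=1$ ($j\in N$), $\sum_j d_jx_{ij}\le My_i$ ($i\in N$), $\sum_i y_i\le k$, $0\le x_{ij}\le y_i$, $0\le y_i\le1$. For $j\in N$ let $C_j=\sum_{i\in N}c_{ij}x_{ij}$. Clustering procedure: order the locations as $1,\dots,n$ so that $C_1\le\dots\le C_n$ (ties arbitrary); start with $N'=\emptyset$; for $j=1,\dots,n$ in turn, if there is no $l\in N'$ with $c_{lj}\le 2\alpha C_j$, add $j$ to $N'$. Then for each $j\in N$ let $N'(j)$ be a closest element of $N'$ to $j$ (ties arbitrary), and set $M_l=\{j\in N: N'(j)=l\}$ for $l\in N'$. *)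

theory Defs
  imports Complex_Main
begin

definition metric_on :: "'a set \<Rightarrow> ('a \<Rightarrow> 'a \<Rightarrow> real) \<Rightarrow> bool" where
  "metric_on N c \<longleftrightarrow>
     (\<forall>i\<in>N. \<forall>j\<in>N. c i j \<ge> 0) \<and> (\<forall>i\<in>N. c i i = 0) \<and>
     (\<forall>i\<in>N. \<forall>j\<in>N. c i j = c j i) \<and>
     (\<forall>i\<in>N. \<forall>j\<in>N. \<forall>l\<in>N. c i l \<le> c i j + c j l)"

text \<open>Feasibility for the LP relaxation; x i j is the fraction of j's demand served by i.\<close>
definition lp_feasible ::
  "'a set \<Rightarrow> real \<Rightarrow> ('a \<Rightarrow> real) \<Rightarrow> nat \<Rightarrow> ('a \<Rightarrow> 'a \<Rightarrow> real) \<Rightarrow> ('a \<Rightarrow> real) \<Rightarrow> bool" where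
  "lp_feasible N M d k x y \<longleftrightarrow>
     (\<forall>j\<in>N. (\<Sum>i\<in>N. x i j) = 1) \<and>
     (\<forall>i\<in>N. (\<Sum>j\<in>N. d j * x i j) \<le> M * y i) \<and>
     (\<Sum>i\<in>N. y i) \<le> real k \<and>
     (\<forall>i\<in>N. \<forall>j\<in>N. 0 \<le> x i j \<and> x i j \<le> y i) \<and>
     (\<forall>i\<in>N. 0 \<le> y i \<and> y i \<le> 1)"

definition lp_cost ::
  "'a set \<Rightarrow> ('a \<Rightarrow> real) \<Rightarrow> ('a \<Rightarrow> 'a \<Rightarrow> real) \<Rightarrow> ('a \<Rightarrow> 'a \<Rightarrow> real) \<Rightarrow> real" where
  "lp_cost N d c x = (\<Sum>i\<in>N. \<Sum>j\<in>N. d j * c i j * x i j)"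

definition lp_optimal ::
  "'a set \<Rightarrow> real \<Rightarrow> ('a \<Rightarrow> real) \<Rightarrow> nat \<Rightarrow> ('a \<Rightarrow> 'a \<Rightarrow> real) \<Rightarrow>
   ('a \<Rightarrow> 'a \<Rightarrow> real) \<Rightarrow> ('a \<Rightarrow> real) \<Rightarrow> bool" where
  "lp_optimal N M d k c x y \<longleftrightarrow> lp_feasible N M d k x y \<and>
     (\<forall>x' y'. lp_feasible N M d k x' y' \<longrightarrow> lp_cost N d c x \<le> lp_cost N d c x')"

definition Cval :: "'a set \<Rightarrow> ('a \<Rightarrow> 'a \<Rightarrow> real) \<Rightarrow> ('a \<Rightarrow> 'a \<Rightarrow> real) \<Rightarrow> 'a \<Rightarrow> real" where
  "Cval N c x j = (\<Sum>i\<in>N. c i j * x i j)"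

fun greedy :: "('a \<Rightarrow> 'a \<Rightarrow> real) \<Rightarrow> real \<Rightarrow> ('a \<Rightarrow> real) \<Rightarrow> 'a set \<Rightarrow> 'a list \<Rightarrow> 'a set" where
  "greedy c \<alpha> C acc [] = acc"
| "greedy c \<alpha> C acc (j # js) =
     greedy c \<alpha> C (if (\<exists>l\<in>acc. c l j \<le> 2 * \<alpha> * C j) then acc else insert j acc) js"

definition cluster_centers :: "('a \<Rightarrow> 'a \<Rightarrow> real) \<Rightarrow> real \<Rightarrow> ('a \<Rightarrow> real) \<Rightarrow> 'a list \<Rightarrow> 'a set" where
  "cluster_centers c \<alpha> C ord = greedy c \<alpha> C {} ord"

end

theory Submission
  imports Defs
begin

lemma greedy_mono: "acc \<subseteq> greedy c a C acc js"
proof (induction js arbitrary: acc)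
  case (Cons j js)
  then show ?case by (simp, meson dual_order.trans subset_insertI)
qed simp

lemma greedy_sub: "greedy c a C acc js \<subseteq> acc \<union> set js"
proof (induction js arbitrary: acc)
  case (Cons j js)
  have "greedy c a C (if (\<exists>l\<in>acc. c l j \<le> 2 * a * C j) then acc else insert j acc) js
     \<subseteq> (if (\<exists>l\<in>acc. c l j \<le> 2 * a * C j) then acc else insert j acc) \<union> set js"
    by (rule Cons.IH)
  then show ?case by (auto split: if_splits)
qed simp

lemma greedy_cov: "j \<in> set js \<Longrightarrow> j \<in> greedy c a C acc js \<or> (\<exists>l\<in>greedy c a C acc js. c l j \<le> 2 * a * C j)"
proof (induction js arbitrary: acc)
  case Nil then show ?case by simp
next
  case (Cons j' js)
  show ?case
  proof (cases "j = j'")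
    case True
    show ?thesis
    proof (cases "\<exists>l\<in>acc. c l j \<le> 2 * a * C j")
      case True
      then show ?thesis using greedy_mono[of acc c a C js] \<open>j = j'\<close> by auto
    next
      case False
      then show ?thesis using greedy_mono[of "insert j acc" c a C js] \<open>j = j'\<close> by auto
    qed
  next
    case False
    then show ?thesis using Cons by auto
  qed
qed

theorem lemma4:
  fixes N :: "'a set" and M :: real and d :: "'a \<Rightarrow> real" and k :: nat
    and c :: "'a \<Rightarrow> 'a \<Rightarrow> real" and x :: "'a \<Rightarrow> 'a \<Rightarrow> real" and y :: "'a \<Rightarrow> real"
    and \<alpha> :: real and ord :: "'a list" and near :: "'a \<Rightarrow> 'a" and l j :: 'a
  assumes "finite N" and "M > 0" and "\<forall>j\<in>N. d j \<ge> 0" and "k \<ge> 1"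
    and "metric_on N c"
    and "lp_optimal N M d k c x y"
    and "\<alpha> \<ge> 4"
    and "distinct ord" and "set ord = N" and "sorted (map (Cval N c x) ord)"
    and "\<forall>j\<in>N. near j \<in> cluster_centers c \<alpha> (Cval N c x) ord \<and>
           (\<forall>l'\<in>cluster_centers c \<alpha> (Cval N c x) ord. c (near j) j \<le> c l' j)"
    and "l \<in> cluster_centers c \<alpha> (Cval N c x) ord" and "j \<in> N"
  shows "(\<forall>jb\<in>{j'\<in>N. near j' = l}. c l j \<le> 2 * c jb j + 2 * \<alpha> * Cval N c x j) \<and>
         (\<forall>ja\<in>{j'\<in>N. near j' = l}. \<forall>jb\<in>{j'\<in>N. near j' = l}.
            c l ja \<le> c l jb \<longrightarrow> c ja j \<le> 3 * c jb j + 4 * \<alpha> * Cval N c x j)"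
proof -
  define S where "S = cluster_centers c \<alpha> (Cval N c x) ord"
  have SN: "S \<subseteq> N" using greedy_sub[of c \<alpha> "Cval N c x" "{}" ord] assms(9)
    unfolding S_def cluster_centers_def by auto
  have cnn: "\<And>a b. a \<in> N \<Longrightarrow> b \<in> N \<Longrightarrow> c a b \<ge> 0"
   and c0: "\<And>a. a \<in> N \<Longrightarrow> c a a = 0"
   and csym: "\<And>a b. a \<in> N \<Longrightarrow> b \<in> N \<Longrightarrow> c a b = c b a"
   and tri: "\<And>a b e. a \<in> N \<Longrightarrow> b \<in> N \<Longrightarrow> e \<in> N \<Longrightarrow> c a e \<le> c a b + c b e"
    using assms(5) unfolding metric_on_def by auto
  have xnn: "\<And>a b. a \<in> N \<Longrightarrow> b \<in> N \<Longrightarrow> x a b \<ge> 0"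
    using assms(6) unfolding lp_optimal_def lp_feasible_def by auto
  have Cnn: "\<And>j. j \<in> N \<Longrightarrow> Cval N c x j \<ge> 0"
    unfolding Cval_def by (rule sum_nonneg) (simp add: cnn xnn)
  have near: "\<And>j. j \<in> N \<Longrightarrow> c (near j) j \<le> 2 * \<alpha> * Cval N c x j"
  proof -
    fix j assume j: "j \<in> N"
    have "j \<in> S \<or> (\<exists>l\<in>S. c l j \<le> 2 * \<alpha> * Cval N c x j)"
      using greedy_cov[of j ord c \<alpha> "Cval N c x" "{}"] j assms(9)
      unfolding S_def cluster_centers_def by auto
    then show "c (near j) j \<le> 2 * \<alpha> * Cval N c x j"
    proof
      assume "j \<in> S"
      then have "c (near j) j \<le> c j j" using assms(11) j unfolding S_def by auto
      then show ?thesis using c0 j Cnn[OF j] assms(7) by (smt (verit) mult_nonneg_nonneg)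
    next
      assume "\<exists>l\<in>S. c l j \<le> 2 * \<alpha> * Cval N c x j"
      then obtain l where "l \<in> S" "c l j \<le> 2 * \<alpha> * Cval N c x j" by auto
      then show ?thesis using assms(11) j unfolding S_def by force
    qed
  qed
  have nearS: "\<And>j. j \<in> N \<Longrightarrow> near j \<in> N" using assms(11) SN unfolding S_def by auto
  have lN: "l \<in> N" using assms(12) SN unfolding S_def by auto
  have key: "\<And>jb. jb \<in> N \<Longrightarrow> near jb = l \<Longrightarrow> c l jb \<le> c jb j + 2 * \<alpha> * Cval N c x j"
  proof -
    fix jb assume jb: "jb \<in> N" "near jb = l"
    have "c l jb \<le> c (near j) jb" using assms(11) jb assms(13) by auto
    also have "\<dots> \<le> c (near j) j + c j jb" using tri nearS assms(13) jb by blast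
    also have "\<dots> \<le> 2 * \<alpha> * Cval N c x j + c jb j" using near[OF assms(13)] csym jb assms(13) by auto
    finally show "c l jb \<le> c jb j + 2 * \<alpha> * Cval N c x j" by simp
  qed
  have p1: "\<And>jb. jb \<in> N \<Longrightarrow> near jb = l \<Longrightarrow> c l j \<le> 2 * c jb j + 2 * \<alpha> * Cval N c x j"
  proof -
    fix jb assume jb: "jb \<in> N" "near jb = l"
    have "c l j \<le> c l jb + c jb j" using tri lN jb assms(13) by blast
    then show "c l j \<le> 2 * c jb j + 2 * \<alpha> * Cval N c x j" using key[OF jb] by simp
  qed
  show ?thesis
  proof (intro conjI ballI impI)
    fix jb assume "jb \<in> {j'\<in>N. near j' = l}"
    then show "c l j \<le> 2 * c jb j + 2 * \<alpha> * Cval N c x j" using p1 by auto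
  next
    fix ja jb assume a: "ja \<in> {j'\<in>N. near j' = l}" and b: "jb \<in> {j'\<in>N. near j' = l}"
      and le: "c l ja \<le> c l jb"
    have "c ja j \<le> c ja l + c l j" using tri lN a assms(13) by blast
    also have "c ja l = c l ja" using csym lN a by auto
    finally show "c ja j \<le> 3 * c jb j + 4 * \<alpha> * Cval N c x j"
      using le key[of jb] p1[of jb] b by auto
  qed
qed

end
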